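(* Let $m\ge 2$ and consider the memristive Hopfield neural network $$\frac{du_i}{dt}=-a_iu_i+\sum_{j=1}^m w_{ij}f_j(u_j)+k\,\varphi_i(\rho)\,u_i+J_i-P\,u_i\sum_{j=1}^m\Gamma(u_j),\quad 1\le i\le m,\qquad \frac{d\rho}{dt}=\sum_{i=1}^m\gamma_iu_i-b\rho,$$ where $\Gamma(s)=\dfrac{1}{1+\exp[-r(s-V)]}$ with $r>0$, $V\in\mathbb{R}$, $P>0$; $a_i,b,\beta,\eta_i,k>0$; $w_{ij},J_i,\gamma_i\in\mathbb{R}$; $f_i,\varphi_i$ locally Lipschitz with $a_i>k$, $|f_i(s)|\le\beta$, $\varphi_i(s)=1-\eta_is^2$ for all $s\in\mathbb{R}$, $1\le i\le m$. Define $a=\min_ia_i$, $W=\max_{i,j}|w_{ij}|$, $J=\max_i|J_i|$, $\gamma^2=\max_i\gamma_i^2$, $$C_1=\frac{1}{a-k}\Big(\frac{m\gamma^2}{b}+b\Big),\ C_2=\Big(\frac{m\gamma^2}{b}+b\Big)\frac{m(mW\beta+J)^2}{(a-k)^2},\ \mu_0=b\min\Big\{\frac1{C_1},1\Big\},\ Q=1+\frac{C_2}{\mu_0\min\{C_1,1\}},$$ and $a^*=\max_{i,j}|a_i-a_j|$, $W^*=\max_{i,j,\ell}|w_{i\ell}-w_{j\ell}|$, $\eta^*=\max_{i,j}|\eta_i-\eta_j|$, $J^*=\max_{i,j}|J_i-J_j|$. For $\varepsilon>0$ let $$P^*(\varepsilon)=\frac{1}{m\varepsilon}\big(mW^*\beta+a^*Q^{1/2}+k\eta^*Q^{3/2}+J^*\big)\big[1+\exp\{r(\sqrt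 Q+|V|)\}\big].$$ Then for every $\varepsilon>0$, if $P>P^*(\varepsilon)$, the network is approximately synchronized: $$\sup_{g^0\in\mathbb{R}^{m+1}}\ \max_{1\le i<j\le m}\ \limsup_{t\to\infty}|u_i(t)-u_j(t)|<\varepsilon,$$ where $(u_1,\dots,u_m,\rho)$ is the solution with initial state $g^0$, and this convergence occurs at the uniform exponential rate $$\mu(P)=(a-k)+\frac{mP}{1+\exp\{r(\sqrt Q+|V|)\}}>0,$$ in the sense that there is a constant $D<\varepsilon$ (independent of the initial state) such that for every initial state there is $T\ge0$ with $|u_i(t)-u_j(t)|^2\le e^{-\mu(P)(t-T)}|u_i(T)-u_j(T)|^2+D^2$ for all $t>T$ and all $i\ne j$.
   Context: The paper calls a network approximately synchronizable if for every prescribed gap $\varepsilon>0$ there is a threshold on the coupling parameter beyond which the synchronous degree $\sup_{g^0}\max_{i<j}\limsup_{t\to\infty}|u_i(t)-u_j(t)|$ is less than $\varepsilon$; if the limsup convergence admits a uniform exponential rate, it is called approximate exponential synchronization. Solutions exist globally in time for every initial state. *)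

theory Defs
  imports "HOL-Analysis.Analysis"
begin

(* Indices 1..m of the paper are rendered as 0..<m. *)

definition Gam :: "real \<Rightarrow> real \<Rightarrow> real \<Rightarrow> real" where
  "Gam r V s = 1 / (1 + exp (- r * (s - V)))"

definition amin :: "nat \<Rightarrow> (nat \<Rightarrow> real) \<Rightarrow> real" where
  "amin m a = Min (a ` {..<m})"
definition Wmax :: "nat \<Rightarrow> (nat \<Rightarrow> nat \<Rightarrow> real) \<Rightarrow> real" where
  "Wmax m w = Max ((\<lambda>(i,j). \<bar>w i j\<bar>) ` ({..<m} \<times> {..<m}))"
definition Jmax :: "nat \<Rightarrow> (nat \<Rightarrow> real) \<Rightarrow> real" where
  "Jmax m J = Max ((\<lambda>i. \<bar>J i\<bar>) ` {..<m})"
definition gam2 :: "nat \<Rightarrow> (nat \<Rightarrow> real) \<Rightarrow> real" where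
  "gam2 m \<gamma> = Max ((\<lambda>i. (\<gamma> i)\<^sup>2) ` {..<m})"
definition dstar :: "nat \<Rightarrow> (nat \<Rightarrow> real) \<Rightarrow> real" where
  "dstar m x = Max ((\<lambda>(i,j). \<bar>x i - x j\<bar>) ` ({..<m} \<times> {..<m}))"
definition Wstar :: "nat \<Rightarrow> (nat \<Rightarrow> nat \<Rightarrow> real) \<Rightarrow> real" where
  "Wstar m w = Max ((\<lambda>(i,j,l). \<bar>w i l - w j l\<bar>) ` ({..<m} \<times> {..<m} \<times> {..<m}))"

definition C1 :: "nat \<Rightarrow> (nat \<Rightarrow> real) \<Rightarrow> real \<Rightarrow> real \<Rightarrow> (nat \<Rightarrow> real) \<Rightarrow> real" where
  "C1 m a k b \<gamma> = (1 / (amin m a - k)) * (real m * gam2 m \<gamma> / b + b)"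

definition C2 :: "nat \<Rightarrow> (nat \<Rightarrow> real) \<Rightarrow> real \<Rightarrow> real \<Rightarrow> (nat \<Rightarrow> real)
    \<Rightarrow> (nat \<Rightarrow> nat \<Rightarrow> real) \<Rightarrow> real \<Rightarrow> (nat \<Rightarrow> real) \<Rightarrow> real" where
  "C2 m a k b \<gamma> w \<beta> J = (real m * gam2 m \<gamma> / b + b) *
      (real m * (real m * Wmax m w * \<beta> + Jmax m J)\<^sup>2 / (amin m a - k)\<^sup>2)"

definition mu0 :: "nat \<Rightarrow> (nat \<Rightarrow> real) \<Rightarrow> real \<Rightarrow> real \<Rightarrow> (nat \<Rightarrow> real) \<Rightarrow> real" where
  "mu0 m a k b \<gamma> = b * min (1 / C1 m a k b \<gamma>) 1"

definition Qc :: "nat \<Rightarrow> (nat \<Rightarrow> real) \<Rightarrow> real \<Rightarrow> real \<Rightarrow> (nat \<Rightarrow> real)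
    \<Rightarrow> (nat \<Rightarrow> nat \<Rightarrow> real) \<Rightarrow> real \<Rightarrow> (nat \<Rightarrow> real) \<Rightarrow> real" where
  "Qc m a k b \<gamma> w \<beta> J = 1 + C2 m a k b \<gamma> w \<beta> J / (mu0 m a k b \<gamma> * min (C1 m a k b \<gamma>) 1)"

definition Pstar :: "nat \<Rightarrow> (nat \<Rightarrow> real) \<Rightarrow> real \<Rightarrow> real \<Rightarrow> (nat \<Rightarrow> real)
    \<Rightarrow> (nat \<Rightarrow> nat \<Rightarrow> real) \<Rightarrow> real \<Rightarrow> (nat \<Rightarrow> real) \<Rightarrow> (nat \<Rightarrow> real)
    \<Rightarrow> real \<Rightarrow> real \<Rightarrow> real \<Rightarrow> real" where
  "Pstar m a k b \<gamma> w \<beta> J \<eta> r V \<epsilon> =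
     (let Q = Qc m a k b \<gamma> w \<beta> J in
      (1 / (real m * \<epsilon>)) *
      (real m * Wstar m w * \<beta> + dstar m a * sqrt Q + k * dstar m \<eta> * Q powr (3/2) + dstar m J) *
      (1 + exp (r * (sqrt Q + \<bar>V\<bar>))))"

definition muP :: "nat \<Rightarrow> (nat \<Rightarrow> real) \<Rightarrow> real \<Rightarrow> real \<Rightarrow> (nat \<Rightarrow> real)
    \<Rightarrow> (nat \<Rightarrow> nat \<Rightarrow> real) \<Rightarrow> real \<Rightarrow> (nat \<Rightarrow> real) \<Rightarrow> real \<Rightarrow> real \<Rightarrow> real \<Rightarrow> real" where
  "muP m a k b \<gamma> w \<beta> J r V P =
     (amin m a - k) + real m * P / (1 + exp (r * (sqrt (Qc m a k b \<gamma> w \<beta> J) + \<bar>V\<bar>)))"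

definition is_solution ::
  "nat \<Rightarrow> (nat \<Rightarrow> real) \<Rightarrow> (nat \<Rightarrow> nat \<Rightarrow> real) \<Rightarrow> (nat \<Rightarrow> real \<Rightarrow> real) \<Rightarrow> real
   \<Rightarrow> (nat \<Rightarrow> real \<Rightarrow> real) \<Rightarrow> (nat \<Rightarrow> real) \<Rightarrow> real \<Rightarrow> real \<Rightarrow> real
   \<Rightarrow> (nat \<Rightarrow> real) \<Rightarrow> real
   \<Rightarrow> (nat \<Rightarrow> real \<Rightarrow> real) \<Rightarrow> (real \<Rightarrow> real) \<Rightarrow> bool" where
  "is_solution m a w f k \<phi> J P r V \<gamma> b u \<rho> \<longleftrightarrow>
     (\<forall>t\<ge>0.
        (\<forall>i<m. (u i has_real_derivative
            (- a i * u i t + (\<Sum>j<m. w i j * f j (u j t)) + k * \<phi> i (\<rho> t) * u i t + J i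
             - P * u i t * (\<Sum>j<m. Gam r V (u j t)))) (at t within {0..}))
      \<and> (\<rho> has_real_derivative ((\<Sum>i<m. \<gamma> i * u i t) - b * \<rho> t)) (at t within {0..}))"

end

theory Submission
  imports Defs
begin


lemma comparison:
  fixes y y' :: "real \<Rightarrow> real"
  assumes c: "c > 0" and d: "\<forall>t\<ge>T0. (y has_real_derivative y' t) (at t)"
    and ineq: "\<forall>t\<ge>T0. y' t \<le> -c * y t + K" and tT: "t \<ge> T0"
  shows "y t \<le> exp (-c*(t-T0)) * (y T0 - K/c) + K/c"
proof -
  let ?z = "\<lambda>x0. exp (c*x0) * (y x0 - K/c)"
  have "?z t \<le> ?z T0"
  proof (rule DERIV_nonpos_imp_nonincreasing[OF tT])
    fix x assume x: "T0 \<le> x" "x \<le> t"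
    have "(?z has_real_derivative (c*exp(c*x)*(y x - K/c) + exp(c*x)*y' x)) (at x)"
      using d x by (auto intro!: derivative_eq_intros simp: algebra_simps)
    moreover have "c*exp(c*x)*(y x - K/c) + exp(c*x)*y' x = exp(c*x) * (c * y x - K + y' x)"
      using c by (simp add: field_simps)
    moreover have "exp(c*x) * (c * y x - K + y' x) \<le> 0"
      using ineq x by (intro mult_nonneg_nonpos) auto
    ultimately show "\<exists>z. (?z has_real_derivative z) (at x) \<and> z \<le> 0" by auto
  qed
  then have "exp (-c*t) * ?z t \<le> exp (-c*t) * ?z T0" by (intro mult_left_mono) auto
  moreover have "exp (-c*t) * ?z t = y t - K/c" by (simp add: exp_add[symmetric])
  moreover have "exp (-c*t) * ?z T0 = exp (-c*(t-T0)) * (y T0 - K/c)"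
    by (simp add: exp_add[symmetric] algebra_simps)
  ultimately show ?thesis by linarith
qed

lemma exp_small:
  fixes c \<delta> A t t0 :: real
  assumes "c > 0" "\<delta> > 0" "A \<ge> 0" "t \<ge> t0 + A/(c*\<delta>)"
  shows "exp (-c*(t-t0)) * A \<le> \<delta>"
proof -
  have x: "c*(t-t0) \<ge> A/\<delta>" using assms
    by (smt (verit, ccfv_SIG) divide_divide_eq_left mult.commute pos_divide_le_eq)
  have "exp (c*(t-t0)) \<ge> c*(t-t0)" by (smt (verit) exp_ge_add_one_self)
  hence "exp (c*(t-t0)) \<ge> A/\<delta>" using x by linarith
  hence "A \<le> \<delta> * exp (c*(t-t0))" using assms by (simp add: pos_divide_le_eq mult.commute)
  hence "exp (-c*(t-t0)) * A \<le> exp (-c*(t-t0)) * (\<delta> * exp (c*(t-t0)))" by (intro mult_left_mono) auto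
  also have "\<dots> = \<delta> * (exp (c*(t-t0)) * exp (-(c*(t-t0))))" by (simp add: algebra_simps)
  also have "\<dots> = \<delta>" by (simp only: exp_minus_inverse mult_1_right)
  finally show ?thesis .
qed

lemma deriv_at:
  assumes "(f has_real_derivative d) (at t within {0..})" "t > 0"
  shows "(f has_real_derivative d) (at t)"
  using assms at_within_interior[of t "{0..}"] by simp



lemma amin_le: "i < m \<Longrightarrow> amin m a \<le> a i"
  unfolding amin_def by (intro Min_le) auto
lemma amin_in: "m > 0 \<Longrightarrow> \<exists>i<m. amin m a = a i"
proof -
  assume "m > 0"
  hence "amin m a \<in> a ` {..<m}" unfolding amin_def by (intro Min_in) auto
  thus ?thesis by auto
qed
lemma Wmax_ge: "i < m \<Longrightarrow> j < m \<Longrightarrow> \<bar>w i j\<bar> \<le> Wmax m w"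
  unfolding Wmax_def by (intro Max_ge) auto
lemma Jmax_ge: "i < m \<Longrightarrow> \<bar>J i\<bar> \<le> Jmax m J"
  unfolding Jmax_def by (intro Max_ge) auto
lemma gam2_ge: "i < m \<Longrightarrow> (g i)\<^sup>2 \<le> gam2 m g"
  unfolding gam2_def by (intro Max_ge) auto
lemma dstar_ge: "i < m \<Longrightarrow> j < m \<Longrightarrow> \<bar>x i - x j\<bar> \<le> dstar m x"
  unfolding dstar_def by (intro Max_ge) auto
lemma Wstar_ge: "i < m \<Longrightarrow> j < m \<Longrightarrow> l < m \<Longrightarrow> \<bar>w i l - w j l\<bar> \<le> Wstar m w"
  unfolding Wstar_def by (intro Max_ge) (auto intro!: image_eqI[where x="(i,j,l)"])
lemma dstar_nn: "m > 0 \<Longrightarrow> dstar m x \<ge> 0"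
  using dstar_ge[of 0 m 0 x] by simp
lemma Wstar_nn: "m > 0 \<Longrightarrow> Wstar m w \<ge> 0"
  using Wstar_ge[of 0 m 0 0 w] by simp
lemma gam2_nn: "m > 0 \<Longrightarrow> gam2 m g \<ge> 0"
  using gam2_ge[of 0 m g] by (smt (verit) zero_le_power2)
lemma Wmax_nn: "m > 0 \<Longrightarrow> Wmax m w \<ge> 0"
  using Wmax_ge[of 0 m 0 w] by simp
lemma Jmax_nn: "m > 0 \<Longrightarrow> Jmax m J \<ge> 0"
  using Jmax_ge[of 0 m J] by simp

lemma amgm: fixes c x B :: real assumes "c > 0" shows "2*\<bar>x\<bar>*B \<le> c*x\<^sup>2 + B\<^sup>2/c"
proof -
  have "0 \<le> (c*\<bar>x\<bar> - B)\<^sup>2" by simp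
  hence "2*c*\<bar>x\<bar>*B \<le> c*(c*x\<^sup>2) + B\<^sup>2" by (simp add: power2_eq_square algebra_simps)
  hence "c*(2*\<bar>x\<bar>*B) \<le> c*(c*x\<^sup>2 + B\<^sup>2/c)" using assms by (simp add: algebra_simps)
  thus ?thesis using assms by (simp add: mult_le_cancel_left_pos)
qed

lemma ubound:
  fixes ai A k \<eta> G0 P sw Bw Ji Jm x \<rho> :: real
  assumes "ai \<ge> A" "A > k" "k > 0" "\<eta> \<ge> 0" "G0 \<ge> 0" "P > 0" "\<bar>sw\<bar> \<le> Bw" "\<bar>Ji\<bar> \<le> Jm"
  shows "2*x*(-ai*x + sw + k*(1-\<eta>*\<rho>\<^sup>2)*x + Ji - P*x*G0) \<le> -(A-k)*x\<^sup>2 + (Bw+Jm)\<^sup>2/(A-k)"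
proof -
  have e: "2*x*(-ai*x + sw + k*(1-\<eta>*\<rho>\<^sup>2)*x + Ji - P*x*G0)
     = -2*(ai-k)*x\<^sup>2 + 2*x*(sw+Ji) - 2*(k*\<eta>*\<rho>\<^sup>2)*x\<^sup>2 - 2*(P*G0)*x\<^sup>2"
    by (simp add: power2_eq_square algebra_simps)
  have "k*\<eta>*\<rho>\<^sup>2*x\<^sup>2 \<ge> 0" using assms by simp
  moreover have "P*G0*x\<^sup>2 \<ge> 0" using assms by simp
  moreover have "(ai-k)*x\<^sup>2 \<ge> (A-k)*x\<^sup>2" using assms by (intro mult_right_mono) auto
  moreover have "x*(sw+Ji) \<le> \<bar>x\<bar>*(Bw+Jm)"
  proof -
    have "x*(sw+Ji) \<le> \<bar>x*(sw+Ji)\<bar>" by simp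
    also have "\<dots> = \<bar>x\<bar>*\<bar>sw+Ji\<bar>" by (simp add: abs_mult)
    also have "\<dots> \<le> \<bar>x\<bar>*(Bw+Jm)" using assms by (intro mult_left_mono) auto
    finally show ?thesis .
  qed
  moreover have "2*\<bar>x\<bar>*(Bw+Jm) \<le> (A-k)*x\<^sup>2 + (Bw+Jm)\<^sup>2/(A-k)" using assms by (intro amgm) auto
  ultimately show ?thesis unfolding e by linarith
qed

lemma rhobound:
  fixes \<rho> s b :: real assumes "b > 0"
  shows "2*\<rho>*(s - b*\<rho>) \<le> -b*\<rho>\<^sup>2 + s\<^sup>2/b"
proof -
  have "2*\<bar>\<rho>\<bar>*\<bar>s\<bar> \<le> b*\<rho>\<^sup>2 + \<bar>s\<bar>\<^sup>2/b" using amgm[OF assms, of "\<bar>\<rho>\<bar>" "\<bar>s\<bar>"] by simp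
  moreover have "\<rho> * s \<le> \<bar>\<rho>\<bar>*\<bar>s\<bar>" by (simp add: abs_mult[symmetric])
  ultimately show ?thesis by (simp add: power2_eq_square algebra_simps)
qed

lemma syncbound:
  fixes ai A k \<eta> G0 P F G x \<rho> \<mu> :: real
  assumes "ai \<ge> A" "\<eta> \<ge> 0" "k > 0" "P > 0" "G0 \<ge> L" "\<bar>F\<bar> \<le> G" "\<mu> = A - k + P*L" "\<mu> > 0"
  shows "2*x*(-(ai - k + k*\<eta>*\<rho>\<^sup>2 + P*G0)*x + F) \<le> -\<mu>*x\<^sup>2 + G\<^sup>2/\<mu>"
proof -
  have e: "2*x*(-(ai - k + k*\<eta>*\<rho>\<^sup>2 + P*G0)*x + F)
     = -2*(ai-k+P*G0)*x\<^sup>2 + 2*x*F - 2*(k*\<eta>*\<rho>\<^sup>2)*x\<^sup>2"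
    by (simp add: power2_eq_square algebra_simps)
  have "k*\<eta>*\<rho>\<^sup>2*x\<^sup>2 \<ge> 0" using assms by simp
  moreover have PL: "P*G0 \<ge> P*L" using assms by (intro mult_left_mono) auto
  moreover have "(ai-k+P*G0) \<ge> \<mu>" using assms PL by linarith
  hence "(ai-k+P*G0)*x\<^sup>2 \<ge> \<mu>*x\<^sup>2" by (intro mult_right_mono) auto
  moreover note this
  moreover have "x*F \<le> \<bar>x\<bar>*G"
  proof -
    have "x*F \<le> \<bar>x*F\<bar>" by simp
    also have "\<dots> = \<bar>x\<bar>*\<bar>F\<bar>" by (simp add: abs_mult)
    also have "\<dots> \<le> \<bar>x\<bar>*G" using assms by (intro mult_left_mono) auto
    finally show ?thesis .
  qed
  moreover have "2*\<bar>x\<bar>*G \<le> \<mu>*x\<^sup>2 + G\<^sup>2/\<mu>" using assms by (intro amgm) auto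
  ultimately show ?thesis unfolding e by linarith
qed

lemma Gam_lower:
  fixes r V s Q :: real
  assumes "r > 0" "\<bar>s\<bar> \<le> sqrt Q"
  shows "Gam r V s \<ge> 1 / (1 + exp (r * (sqrt Q + \<bar>V\<bar>)))"
proof -
  have "- r * (s - V) \<le> r * (sqrt Q + \<bar>V\<bar>)"
  proof -
    have "-(s-V) \<le> sqrt Q + \<bar>V\<bar>" using assms by linarith
    hence "r*(-(s-V)) \<le> r*(sqrt Q + \<bar>V\<bar>)" using assms by (intro mult_left_mono) auto
    thus ?thesis by (simp add: algebra_simps)
  qed
  hence "exp (- r * (s - V)) \<le> exp (r * (sqrt Q + \<bar>V\<bar>))" by simp
  thus ?thesis unfolding Gam_def
    by (intro divide_left_mono) (auto simp: add_pos_pos)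
qed

lemma Gam_pos: "Gam r V s > 0"
  unfolding Gam_def by (simp add: add_pos_pos)



lemma A_gt_k: "m > 0 \<Longrightarrow> \<forall>i<m. a i > k \<Longrightarrow> amin m a > k"
  using amin_in[of m a] by auto

lemma Q_ge:
  assumes m: "m > 0" and b: "b > 0" and ak: "\<forall>i<m. a i > k"
  shows "Qc m a k b \<gamma> w \<beta> J \<ge> 1 + (real m * gam2 m \<gamma> / b\<^sup>2) * (real m * (real m * Wmax m w * \<beta> + Jmax m J)\<^sup>2 / (amin m a - k)\<^sup>2)
      + real m * (real m * Wmax m w * \<beta> + Jmax m J)\<^sup>2 / (amin m a - k)\<^sup>2"
proof -
  define R where "R = real m * (real m * Wmax m w * \<beta> + Jmax m J)\<^sup>2 / (amin m a - k)\<^sup>2"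
  define g where "g = gam2 m \<gamma>"
  have g: "g \<ge> 0" using gam2_nn[OF m] g_def by simp
  have R: "R \<ge> 0" unfolding R_def by simp
  have Ak: "amin m a - k > 0" using A_gt_k[OF m ak] by simp
  define C where "C = C1 m a k b \<gamma>"
  have C: "C > 0" unfolding C_def C1_def using Ak b g g_def
    by (simp add: add_nonneg_pos)
  define p where "p = min (1/C) 1 * min C 1"
  have p0: "p > 0" using C unfolding p_def by simp
  have p1: "p \<le> 1"
  proof (cases "C \<ge> 1")
    case True thus ?thesis using C unfolding p_def by (simp add: min_def)
  next
    case False thus ?thesis using C unfolding p_def by (simp add: min_def)
  qed
  have C2eq: "C2 m a k b \<gamma> w \<beta> J = (real m * g / b + b) * R"
    unfolding C2_def R_def g_def by simp
  have den: "mu0 m a k b \<gamma> * min (C1 m a k b \<gamma>) 1 = b * p"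
    unfolding mu0_def p_def C_def by simp
  have nn: "(real m * g / b + b) * R \<ge> 0" using g b R by simp
  have "(real m * g / b + b) * R / (b*p) \<ge> (real m * g / b + b) * R / b"
    using p0 p1 b nn by (intro divide_left_mono) (auto intro: mult_pos_pos)
  moreover have "(real m * g / b + b) * R / b = (real m * g / b\<^sup>2) * R + R"
    using b by (simp add: field_simps power2_eq_square)
  ultimately have "Qc m a k b \<gamma> w \<beta> J \<ge> 1 + ((real m * g / b\<^sup>2) * R + R)"
    unfolding Qc_def C2eq den by linarith
  thus ?thesis unfolding R_def g_def by simp
qed



lemma sum_wf_bound:
  assumes "\<forall>j<m. \<bar>c j\<bar> \<le> W" "\<forall>j<m. \<bar>g j\<bar> \<le> \<beta>"
  shows "\<bar>\<Sum>j<m. c j * g j\<bar> \<le> real m * W * \<beta>"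
proof -
  have "\<bar>\<Sum>j<m. c j * g j\<bar> \<le> (\<Sum>j<m. \<bar>c j * g j\<bar>)" by (rule sum_abs)
  also have "\<dots> \<le> (\<Sum>j<m. W * \<beta>)"
    using assms by (intro sum_mono) (auto simp: abs_mult intro!: mult_mono)
  also have "\<dots> = real m * W * \<beta>" by simp
  finally show ?thesis .
qed

lemma absorb:
  assumes m: "m > 0" and b: "b > 0" and P: "P > 0" and k: "k > 0"
    and ak: "\<forall>i<m. a i > k" and eta: "\<forall>i<m. \<eta> i > 0"
    and f_bdd: "\<forall>i<m. \<forall>s. \<bar>f i s\<bar> \<le> \<beta>"
    and phi: "\<forall>i<m. \<forall>s. \<phi> i s = 1 - \<eta> i * s\<^sup>2"
    and sol: "is_solution m a w f k \<phi> J P r V \<gamma> b u \<rho>"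
  shows "\<exists>T\<ge>1. \<forall>t\<ge>T. (\<forall>i<m. \<bar>u i t\<bar> \<le> sqrt (Qc m a k b \<gamma> w \<beta> J)) \<and> (\<rho> t)\<^sup>2 \<le> Qc m a k b \<gamma> w \<beta> J"
proof -
  define A where "A = amin m a"
  define Bc where "Bc = real m * Wmax m w * \<beta> + Jmax m J"
  define R where "R = real m * Bc\<^sup>2 / (A - k)\<^sup>2"
  define g where "g = gam2 m \<gamma>"
  define c0 where "c0 = real m * g / b\<^sup>2"
  define Q where "Q = Qc m a k b \<gamma> w \<beta> J"
  have Ak: "A - k > 0" using A_gt_k[OF m ak] A_def by simp
  have g0: "g \<ge> 0" using gam2_nn[OF m] g_def by simp
  have c00: "c0 \<ge> 0" using g0 unfolding c0_def by simp
  have R0: "R \<ge> 0" unfolding R_def by simp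
  have QR: "Q \<ge> 1 + c0 * R + R" using Q_ge[OF m b ak] unfolding Q_def c0_def R_def Bc_def A_def g_def .
  define u' where "u' i t = (- a i * u i t + (\<Sum>j<m. w i j * f j (u j t)) + k * \<phi> i (\<rho> t) * u i t + J i
             - P * u i t * (\<Sum>j<m. Gam r V (u j t)))" for i t
  define s where "s t = (\<Sum>i<m. \<gamma> i * u i t)" for t
  have ud: "\<forall>i<m. \<forall>t\<ge>1. (u i has_real_derivative u' i t) (at t)"
    using sol unfolding is_solution_def u'_def by (auto intro: deriv_at)
  have rd: "\<forall>t\<ge>1. (\<rho> has_real_derivative (s t - b * \<rho> t)) (at t)"
    using sol unfolding is_solution_def s_def by (auto intro: deriv_at)
  define S where "S t = (\<Sum>i<m. (u i t)\<^sup>2)" for t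
  define S' where "S' t = (\<Sum>i<m. 2 * u i t * u' i t)" for t
  have S0: "S t \<ge> 0" for t unfolding S_def by (intro sum_nonneg) auto
  have Sd: "\<forall>t\<ge>1. (S has_real_derivative S' t) (at t)"
  proof (intro allI impI)
    fix t :: real assume t: "t \<ge> 1"
    have "((\<lambda>t. \<Sum>i<m. (u i t)\<^sup>2) has_real_derivative (\<Sum>i<m. 2 * u i t * u' i t)) (at t)"
      using ud t by (auto intro!: derivative_eq_intros simp: ac_simps)
    thus "(S has_real_derivative S' t) (at t)" unfolding S_def[abs_def] S'_def .
  qed
  have Sineq: "\<forall>t\<ge>1. S' t \<le> -(A-k) * S t + real m * Bc\<^sup>2 / (A - k)"
  proof (intro allI impI)
    fix t :: real assume t: "t \<ge> 1"
    have "S' t \<le> (\<Sum>i<m. -(A-k) * (u i t)\<^sup>2 + Bc\<^sup>2/(A-k))"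
      unfolding S'_def
    proof (intro sum_mono)
      fix i assume i: "i \<in> {..<m}"
      have sw: "\<bar>\<Sum>j<m. w i j * f j (u j t)\<bar> \<le> real m * Wmax m w * \<beta>"
        using i f_bdd Wmax_ge[of i m _ w] by (intro sum_wf_bound) auto
      have G0: "(\<Sum>j<m. Gam r V (u j t)) \<ge> 0" by (intro sum_nonneg) (simp add: less_imp_le[OF Gam_pos])
      have "2 * u i t * u' i t = 2 * u i t * (- a i * u i t + (\<Sum>j<m. w i j * f j (u j t))
            + k * (1 - \<eta> i * (\<rho> t)\<^sup>2) * u i t + J i - P * u i t * (\<Sum>j<m. Gam r V (u j t)))"
        unfolding u'_def using phi i by simp
      also have "\<dots> \<le> -(A-k) * (u i t)\<^sup>2 + Bc\<^sup>2/(A-k)"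
        unfolding Bc_def
        by (rule ubound) (use i amin_le[of i m a] A_def Ak k eta Jmax_ge[of i m J] sw G0 P in auto)
      finally show "2 * u i t * u' i t \<le> -(A-k) * (u i t)\<^sup>2 + Bc\<^sup>2/(A-k)" .
    qed
    also have "\<dots> = -(A-k) * S t + real m * Bc\<^sup>2 / (A - k)"
      unfolding S_def by (simp add: sum.distrib sum_distrib_left)
    finally show "S' t \<le> -(A-k) * S t + real m * Bc\<^sup>2 / (A - k)" .
  qed
  have KR: "real m * Bc\<^sup>2 / (A - k) / (A - k) = R" unfolding R_def by (simp add: power2_eq_square)
  have Sb: "S t \<le> exp (-(A-k)*(t-1)) * (S 1 - R) + R" if "t \<ge> 1" for t
    using comparison[OF Ak Sd Sineq that] unfolding KR .
  define \<delta> where "\<delta> = 1 / (2 * (1 + c0))"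
  have \<delta>0: "\<delta> > 0" using c00 unfolding \<delta>_def by simp
  have \<delta>h: "\<delta> * (1 + c0) = 1/2" using c00 unfolding \<delta>_def by simp
  define T1 where "T1 = 1 + S 1 / ((A-k)*\<delta>)"
  have T1: "T1 \<ge> 1" unfolding T1_def using S0[of 1] Ak \<delta>0 by simp
  have SR: "S t \<le> R + \<delta>" if "t \<ge> T1" for t
  proof -
    have "exp (-(A-k)*(t-1)) * S 1 \<le> \<delta>"
      using that unfolding T1_def by (intro exp_small Ak \<delta>0 S0)
    moreover have "exp (-(A-k)*(t-1)) * R \<ge> 0" using R0 by simp
    moreover have "S t \<le> exp (-(A-k)*(t-1)) * (S 1 - R) + R" using Sb that T1 by simp
    ultimately show ?thesis by (simp add: algebra_simps)
  qed
  define Y where "Y t = (\<rho> t)\<^sup>2" for t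
  have Yd: "\<forall>t\<ge>T1. (Y has_real_derivative 2 * \<rho> t * (s t - b * \<rho> t)) (at t)"
  proof (intro allI impI)
    fix t :: real assume t: "t \<ge> T1"
    have "((\<lambda>t. (\<rho> t)\<^sup>2) has_real_derivative 2 * \<rho> t * (s t - b * \<rho> t)) (at t)"
      using rd t T1 by (auto intro!: derivative_eq_intros)
    thus "(Y has_real_derivative 2 * \<rho> t * (s t - b * \<rho> t)) (at t)" unfolding Y_def[abs_def] .
  qed
  have Yineq: "\<forall>t\<ge>T1. 2 * \<rho> t * (s t - b * \<rho> t) \<le> -b * Y t + real m * g * (R + \<delta>) / b"
  proof (intro allI impI)
    fix t :: real assume t: "t \<ge> T1"
    have "(s t)\<^sup>2 \<le> (\<Sum>i<m. (\<gamma> i)\<^sup>2) * S t" unfolding s_def S_def by (rule Cauchy_Schwarz_ineq_sum)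
    also have "\<dots> \<le> (real m * g) * (R + \<delta>)"
    proof (intro mult_mono)
      show "(\<Sum>i<m. (\<gamma> i)\<^sup>2) \<le> real m * g"
        using sum_mono[of "{..<m}" "\<lambda>i. (\<gamma> i)\<^sup>2" "\<lambda>i. g"] gam2_ge[of _ m \<gamma>] g_def by auto
    qed (use SR t g0 S0 in auto)
    finally have "(s t)\<^sup>2 / b \<le> real m * g * (R + \<delta>) / b" using b by (intro divide_right_mono) auto
    thus "2 * \<rho> t * (s t - b * \<rho> t) \<le> -b * Y t + real m * g * (R + \<delta>) / b"
      using rhobound[OF b, of "\<rho> t" "s t"] unfolding Y_def by linarith
  qed
  have KY: "real m * g * (R + \<delta>) / b / b = c0 * (R + \<delta>)" unfolding c0_def by (simp add: power2_eq_square)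
  have Yb: "Y t \<le> exp (-b*(t-T1)) * (Y T1 - c0 * (R + \<delta>)) + c0 * (R + \<delta>)" if "t \<ge> T1" for t
    using comparison[OF b Yd Yineq that] unfolding KY .
  define T2 where "T2 = T1 + Y T1 / (b*\<delta>)"
  have T2: "T2 \<ge> T1" unfolding T2_def Y_def using b \<delta>0 by simp
  show ?thesis
  proof (intro exI[of _ T2] conjI allI impI)
    show "T2 \<ge> 1" using T1 T2 by simp
    fix t assume t: "t \<ge> T2"
    have "exp (-b*(t-T1)) * Y T1 \<le> \<delta>"
      using t unfolding T2_def by (intro exp_small b \<delta>0) (auto simp: Y_def)
    moreover have "exp (-b*(t-T1)) * (c0 * (R + \<delta>)) \<ge> 0" using R0 c00 \<delta>0 by simp
    moreover have "Y t \<le> exp (-b*(t-T1)) * (Y T1 - c0 * (R + \<delta>)) + c0 * (R + \<delta>)" using Yb t T2 by simp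
    ultimately have "Y t \<le> \<delta> + c0 * (R + \<delta>)" by (simp add: algebra_simps)
    also have "\<dots> = c0 * R + \<delta> * (1 + c0)" by (simp add: algebra_simps)
    also have "\<dots> \<le> Q" using \<delta>h QR R0 by simp
    finally show "(\<rho> t)\<^sup>2 \<le> Qc m a k b \<gamma> w \<beta> J" unfolding Y_def Q_def .
    fix i assume i: "i < m"
    have "(u i t)\<^sup>2 \<le> S t" unfolding S_def using i
      by (intro member_le_sum) auto
    also have "\<dots> \<le> R + \<delta>" using SR t T2 by simp
    also have "\<dots> \<le> Q"
    proof -
      have "\<delta> * c0 \<ge> 0" "c0 * R \<ge> 0" using c00 \<delta>0 R0 by simp_all
      thus ?thesis using \<delta>h QR by (simp add: algebra_simps)
    qed
    finally have "\<bar>u i t\<bar>\<^sup>2 \<le> Q" by simp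
    thus "\<bar>u i t\<bar> \<le> sqrt (Qc m a k b \<gamma> w \<beta> J)" unfolding Q_def by (rule real_le_rsqrt)
  qed
qed



lemma exp_lim: fixes \<mu> T :: real assumes "\<mu> > 0" shows "((\<lambda>t. exp (-\<mu>*(t-T))) \<longlongrightarrow> 0) at_top"
  unfolding tendsto_iff
proof (intro allI impI)
  fix e :: real assume e: "e > 0"
  have "\<forall>t\<ge>T + 1/(\<mu>*(e/2)). exp (-\<mu>*(t-T)) * 1 \<le> e/2"
    using assms e by (intro allI impI exp_small) auto
  hence "\<forall>t\<ge>T + 1/(\<mu>*(e/2)). dist (exp (-\<mu>*(t-T))) 0 < e" using e by auto
  thus "\<forall>\<^sub>F t in at_top. dist (exp (-\<mu>*(t-T))) 0 < e"
    unfolding eventually_at_top_linorder by blast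
qed

lemma limsup_bound:
  fixes x :: "real \<Rightarrow> real"
  assumes "\<mu> > 0" "D \<ge> 0" "\<forall>t\<ge>T. \<bar>x t\<bar> \<le> sqrt (exp (-\<mu>*(t-T)) * c + D\<^sup>2)"
  shows "Limsup at_top (\<lambda>t. ereal \<bar>x t\<bar>) \<le> ereal D"
proof -
  have "Limsup at_top (\<lambda>t. ereal \<bar>x t\<bar>) \<le> Limsup at_top (\<lambda>t. ereal (sqrt (exp (-\<mu>*(t-T)) * c + D\<^sup>2)))"
    using assms(3) by (intro Limsup_mono) (auto simp: eventually_at_top_linorder)
  also have "\<dots> = ereal (sqrt (0 * c + D\<^sup>2))"
  proof (intro lim_imp_Limsup)
    have "((\<lambda>t. sqrt (exp (-\<mu>*(t-T)) * c + D\<^sup>2)) \<longlongrightarrow> sqrt (0 * c + D\<^sup>2)) at_top"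
      by (intro tendsto_intros exp_lim assms(1))
    thus "((\<lambda>t. ereal (sqrt (exp (-\<mu>*(t-T)) * c + D\<^sup>2))) \<longlongrightarrow> ereal (sqrt (0 * c + D\<^sup>2))) at_top"
      by (simp only: lim_ereal)
  qed simp
  also have "\<dots> = ereal D" using assms(2) by simp
  finally show ?thesis .
qed



theorem theorem3p1:
  fixes m :: nat and a \<eta> J \<gamma> :: "nat \<Rightarrow> real" and w :: "nat \<Rightarrow> nat \<Rightarrow> real"
    and f \<phi> :: "nat \<Rightarrow> real \<Rightarrow> real" and k b \<beta> r V P \<epsilon> :: real
  assumes m2: "m \<ge> 2"
    and r_pos: "r > 0" and P_pos: "P > 0" and b_pos: "b > 0" and beta_pos: "\<beta> > 0"
    and k_pos: "k > 0"
    and a_pos: "\<forall>i<m. a i > 0" and eta_pos: "\<forall>i<m. \<eta> i > 0"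
    and a_gt_k: "\<forall>i<m. a i > k"
    and f_lip: "\<forall>i<m. \<forall>x. \<exists>\<delta>>0. \<exists>L. L-lipschitz_on (ball x \<delta>) (f i)"
    and f_bdd: "\<forall>i<m. \<forall>s. \<bar>f i s\<bar> \<le> \<beta>"
    and phi_def: "\<forall>i<m. \<forall>s. \<phi> i s = 1 - \<eta> i * s\<^sup>2"
    and eps_pos: "\<epsilon> > 0"
    and P_big: "P > Pstar m a k b \<gamma> w \<beta> J \<eta> r V \<epsilon>"
  shows "muP m a k b \<gamma> w \<beta> J r V P > 0
    \<and> (\<exists>D. 0 \<le> D \<and> D < \<epsilon> \<and>
         (\<forall>u \<rho>. is_solution m a w f k \<phi> J P r V \<gamma> b u \<rho> \<longrightarrow>
            (\<forall>i<m. \<forall>j<m. Limsup at_top (\<lambda>t. ereal \<bar>u i t - u j t\<bar>) \<le> ereal D)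
          \<and> (\<exists>T\<ge>0. \<forall>t>T. \<forall>i<m. \<forall>j<m. i \<noteq> j \<longrightarrow>
               (u i t - u j t)\<^sup>2 \<le> exp (- muP m a k b \<gamma> w \<beta> J r V P * (t - T)) * (u i T - u j T)\<^sup>2 + D\<^sup>2)))"
proof -
  have m: "m > 0" using m2 by simp
  define A where "A = amin m a"
  define Q where "Q = Qc m a k b \<gamma> w \<beta> J"
  define E where "E = exp (r * (sqrt Q + \<bar>V\<bar>))"
  define G where "G = real m * Wstar m w * \<beta> + dstar m a * sqrt Q + k * dstar m \<eta> * Q powr (3/2) + dstar m J"
  define \<mu> where "\<mu> = muP m a k b \<gamma> w \<beta> J r V P"
  have Ak: "A - k > 0" using A_gt_k[OF m a_gt_k] A_def by simp
  have Q1: "Q \<ge> 1"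
  proof -
    have "gam2 m \<gamma> \<ge> 0" using gam2_nn[OF m] .
    hence "real m * gam2 m \<gamma> / b\<^sup>2 * (real m * (real m * Wmax m w * \<beta> + Jmax m J)\<^sup>2 / (amin m a - k)\<^sup>2) \<ge> 0"
      by simp
    moreover have "real m * (real m * Wmax m w * \<beta> + Jmax m J)\<^sup>2 / (amin m a - k)\<^sup>2 \<ge> 0" by simp
    ultimately show ?thesis using Q_ge[OF m b_pos a_gt_k, of \<gamma> w \<beta> J] unfolding Q_def by linarith
  qed
  have E0: "E > 0" unfolding E_def by simp
  have \<mu>eq: "\<mu> = A - k + P * (real m / (1 + E))"
    unfolding \<mu>_def muP_def A_def E_def Q_def by simp
  have PL: "P * (real m / (1 + E)) > 0" using P_pos m E0 by simp
  have \<mu>pos: "\<mu> > 0" using \<mu>eq Ak PL by linarith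
  have Qp: "Q powr (3/2) = Q * sqrt Q"
  proof -
    have "Q powr (3/2) = Q powr (1 + 1/2)" by simp
    also have "\<dots> = Q powr 1 * Q powr (1/2)" using Q1 by (simp only: powr_add)
    also have "\<dots> = Q * sqrt Q" using Q1 by (simp add: powr_half_sqrt)
    finally show ?thesis .
  qed
  have G0: "G \<ge> 0" unfolding G_def Qp using Q1 k_pos beta_pos dstar_nn[OF m] Wstar_nn[OF m]
    by (intro add_nonneg_nonneg mult_nonneg_nonneg) auto
  have PsEq: "Pstar m a k b \<gamma> w \<beta> J \<eta> r V \<epsilon> = (1 / (real m * \<epsilon>)) * G * (1 + E)"
    unfolding Pstar_def Let_def G_def E_def Q_def by simp
  have "\<epsilon> * \<mu> \<ge> \<epsilon> * (P * (real m / (1 + E)))" using \<mu>eq Ak eps_pos by (intro mult_left_mono) auto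
  moreover have "\<epsilon> * (P * (real m / (1 + E))) > \<epsilon> * (Pstar m a k b \<gamma> w \<beta> J \<eta> r V \<epsilon> * (real m / (1 + E)))"
    using P_big eps_pos m E0 by (intro mult_strict_left_mono mult_strict_right_mono) auto
  moreover have "\<epsilon> * (Pstar m a k b \<gamma> w \<beta> J \<eta> r V \<epsilon> * (real m / (1 + E))) = G"
  proof -
    have "1 + E \<noteq> 0" "real m \<noteq> 0" "\<epsilon> \<noteq> 0" using E0 m eps_pos by auto
    hence "\<epsilon> * (1/(real m * \<epsilon>) * G * (1 + E) * (real m / (1 + E))) = G"
      by (simp add: divide_simps)
    thus ?thesis unfolding PsEq .
  qed
  ultimately have Gl: "G < \<epsilon> * \<mu>" by linarith
  define D where "D = G / \<mu>"
  have D0: "D \<ge> 0" unfolding D_def using G0 \<mu>pos by simp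
  have Deps: "D < \<epsilon>" unfolding D_def using Gl \<mu>pos by (simp add: pos_divide_less_eq mult.commute)
  have main: "Limsup at_top (\<lambda>t. ereal \<bar>u i t - u j t\<bar>) \<le> ereal D
       \<and> (\<exists>T\<ge>0. \<forall>t>T. \<forall>i<m. \<forall>j<m. i \<noteq> j \<longrightarrow>
               (u i t - u j t)\<^sup>2 \<le> exp (- \<mu> * (t - T)) * (u i T - u j T)\<^sup>2 + D\<^sup>2)"
    if sol: "is_solution m a w f k \<phi> J P r V \<gamma> b u \<rho>" and ij: "i < m" "j < m" for u \<rho> i j
  proof -
    obtain T where T1: "T \<ge> 1" and Tb: "\<forall>t\<ge>T. (\<forall>i<m. \<bar>u i t\<bar> \<le> sqrt Q) \<and> (\<rho> t)\<^sup>2 \<le> Q"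
      using absorb[OF m b_pos P_pos k_pos a_gt_k eta_pos f_bdd phi_def sol] unfolding Q_def by blast
    define u' where "u' i t = (- a i * u i t + (\<Sum>j<m. w i j * f j (u j t)) + k * \<phi> i (\<rho> t) * u i t + J i
             - P * u i t * (\<Sum>j<m. Gam r V (u j t)))" for i t
    have ud: "\<forall>i<m. \<forall>t\<ge>1. (u i has_real_derivative u' i t) (at t)"
      using sol unfolding is_solution_def u'_def by (auto intro: deriv_at)
    have bnd: "(u i t - u j t)\<^sup>2 \<le> exp (- \<mu> * (t - T)) * (u i T - u j T)\<^sup>2 + D\<^sup>2"
      if ij: "i < m" "j < m" and t: "t \<ge> T" for i j t
    proof -
      define e where "e t = (u i t - u j t)\<^sup>2" for t
      define e' where "e' t = 2 * (u i t - u j t) * (u' i t - u' j t)" for t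
      have ed: "\<forall>t\<ge>T. (e has_real_derivative e' t) (at t)"
      proof (intro allI impI)
        fix t :: real assume t: "t \<ge> T"
        have "((\<lambda>t. (u i t - u j t)\<^sup>2) has_real_derivative e' t) (at t)"
          unfolding e'_def using ud ij t T1 by (auto intro!: derivative_eq_intros simp: ac_simps)
        thus "(e has_real_derivative e' t) (at t)" unfolding e_def[abs_def] .
      qed
      have eineq: "\<forall>t\<ge>T. e' t \<le> -\<mu> * e t + G\<^sup>2/\<mu>"
      proof (intro allI impI)
        fix t :: real assume t: "t \<ge> T"
        define G0 where "G0 = (\<Sum>l<m. Gam r V (u l t))"
        define F where "F = (a j - a i) * u j t + (\<Sum>l<m. (w i l - w j l) * f l (u l t))
            - k * (\<eta> i - \<eta> j) * (\<rho> t)\<^sup>2 * u j t + (J i - J j)"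
        have sdiff: "(\<Sum>l<m. (w i l - w j l) * f l (u l t)) = (\<Sum>l<m. w i l * f l (u l t)) - (\<Sum>l<m. w j l * f l (u l t))"
          by (simp add: sum_subtractf left_diff_distrib)
        have deq: "u' i t - u' j t = -(a i - k + k * \<eta> i * (\<rho> t)\<^sup>2 + P * G0) * (u i t - u j t) + F"
        proof -
          have p1: "\<phi> i (\<rho> t) = 1 - \<eta> i * (\<rho> t)\<^sup>2" and p2: "\<phi> j (\<rho> t) = 1 - \<eta> j * (\<rho> t)\<^sup>2"
            using phi_def ij by auto
          show ?thesis unfolding u'_def F_def G0_def sdiff p1 p2 by (simp add: algebra_simps)
        qed
        have ub: "\<bar>u l t\<bar> \<le> sqrt Q" if "l < m" for l using Tb t that by blast
        have rb: "(\<rho> t)\<^sup>2 \<le> Q" using Tb t by blast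
        have G0b: "G0 \<ge> real m / (1 + E)"
        proof -
          have "(\<Sum>l<m. 1 / (1 + E)) \<le> G0" unfolding G0_def E_def
            by (intro sum_mono Gam_lower r_pos ub) auto
          thus ?thesis by simp
        qed
        have Fb: "\<bar>F\<bar> \<le> G"
        proof -
          have t1: "\<bar>(a j - a i) * u j t\<bar> \<le> dstar m a * sqrt Q"
            unfolding abs_mult using dstar_ge[of j m i a] ij ub[of j] by (intro mult_mono) auto
          have t2: "\<bar>\<Sum>l<m. (w i l - w j l) * f l (u l t)\<bar> \<le> real m * Wstar m w * \<beta>"
            using ij f_bdd Wstar_ge[of i m j _ w] by (intro sum_wf_bound) auto
          have t3: "\<bar>k * (\<eta> i - \<eta> j) * (\<rho> t)\<^sup>2 * u j t\<bar> \<le> k * dstar m \<eta> * Q * sqrt Q"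
            unfolding abs_mult using dstar_ge[of i m j \<eta>] ij ub[of j] rb k_pos Q1 dstar_nn[OF m, of \<eta>]
            by (intro mult_mono) auto
          have t4: "\<bar>J i - J j\<bar> \<le> dstar m J" using dstar_ge[of i m j J] ij by simp
          have "\<bar>F\<bar> \<le> \<bar>(a j - a i) * u j t\<bar> + \<bar>\<Sum>l<m. (w i l - w j l) * f l (u l t)\<bar>
              + \<bar>k * (\<eta> i - \<eta> j) * (\<rho> t)\<^sup>2 * u j t\<bar> + \<bar>J i - J j\<bar>"
            unfolding F_def by linarith
          thus ?thesis using t1 t2 t3 t4 unfolding G_def Qp by linarith
        qed
        have "e' t = 2 * (u i t - u j t) * (-(a i - k + k * \<eta> i * (\<rho> t)\<^sup>2 + P * G0) * (u i t - u j t) + F)"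
          unfolding e'_def deq ..
        also have "\<dots> \<le> -\<mu> * (u i t - u j t)\<^sup>2 + G\<^sup>2/\<mu>"
          by (rule syncbound[where A=A and L="real m / (1 + E)"])
            (use amin_le[of i m a] A_def ij eta_pos k_pos P_pos G0b Fb \<mu>eq \<mu>pos in auto)
        finally show "e' t \<le> -\<mu> * e t + G\<^sup>2/\<mu>" unfolding e_def .
      qed
      have KD: "G\<^sup>2/\<mu>/\<mu> = D\<^sup>2" unfolding D_def by (simp add: power2_eq_square)
      have "e t \<le> exp (-\<mu>*(t-T)) * (e T - D\<^sup>2) + D\<^sup>2"
        using comparison[OF \<mu>pos ed eineq t] unfolding KD .
      moreover have "exp (-\<mu>*(t-T)) * D\<^sup>2 \<ge> 0" by simp
      moreover have "exp (-\<mu>*(t-T)) * (e T - D\<^sup>2) = exp (-\<mu>*(t-T)) * e T - exp (-\<mu>*(t-T)) * D\<^sup>2"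
        by (simp add: right_diff_distrib)
      ultimately have "e t \<le> exp (-\<mu>*(t-T)) * e T + D\<^sup>2" by linarith
      thus ?thesis unfolding e_def by simp
    qed
    show ?thesis
    proof
      have "\<forall>t\<ge>T. \<bar>u i t - u j t\<bar> \<le> sqrt (exp (- \<mu> * (t - T)) * (u i T - u j T)\<^sup>2 + D\<^sup>2)"
        using bnd[OF ij] by (auto intro: real_le_rsqrt)
      thus "Limsup at_top (\<lambda>t. ereal \<bar>u i t - u j t\<bar>) \<le> ereal D"
        by (intro limsup_bound[OF \<mu>pos D0])
      show "\<exists>T\<ge>0. \<forall>t>T. \<forall>i<m. \<forall>j<m. i \<noteq> j \<longrightarrow>
               (u i t - u j t)\<^sup>2 \<le> exp (- \<mu> * (t - T)) * (u i T - u j T)\<^sup>2 + D\<^sup>2"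
        using T1 bnd by (intro exI[of _ T]) auto
    qed
  qed
  show ?thesis
    unfolding \<mu>_def[symmetric]
    using \<mu>pos D0 Deps main m by blast
qed


end
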